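(* For every finite ordered graph $(G,<)$, the order $\prec_B$ is a breadth-first traversal of $G$.
   Context: A finite ordered graph $(G,<)$ is a finite undirected graph with a linear order on its vertices. The canonical breadth-first order $\prec_B$: for vertices $v,w$ let $v_0,w_0$ be the $<$-least vertices of the connected components of $v$ and $w$. Let $<^\star$ be the order on finite sequences of vertices comparing first by length and then lexicographically with respect to $<$. Let $\vec v$ be the $<^\star$-least path from $v_0$ to $v$ (similarly $\vec w$). Then: if $v_0\neq w_0$, $v\prec_B w$ iff $v_0<w_0$; if $v_0=w_0$, $v\prec_B w$ iff $\vec v<^\star\vec w$. A linear order $\prec$ of the vertex set, listing vertices $v_1\prec\dots\prec v_n$, is a breadth-first traversal if for each $i\ge2$, whenever some $v_j$ with $j<i$ has a neighbour outside $\{v_1,\dots,v_{i-1}\}$, $v_i$ is adjacent to $v_{j^*}$ for the least such $j^*$ (i.e. a visiting order of breadth-first search). Equivalently: for all $u\prec v\prec w$ with $u,w$ adjacent, $v$ has a neighbour $x$ with $x\prec v$ and $x\preceq u$. *)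

theory Defs
  imports Main
begin

text \<open>A finite (simple, undirected) graph on vertex set V with adjacency E.
  The linear order on vertices is the order of the type 'a :: linorder.\<close>
definition finite_graph :: "'a set \<Rightarrow> ('a \<Rightarrow> 'a \<Rightarrow> bool) \<Rightarrow> bool" where
  "finite_graph V E \<longleftrightarrow> finite V \<and> (\<forall>x y. E x y \<longrightarrow> x \<in> V \<and> y \<in> V)
     \<and> (\<forall>x y. E x y \<longrightarrow> E y x) \<and> (\<forall>x. \<not> E x x)"

definition comp_min :: "('a::linorder \<Rightarrow> 'a \<Rightarrow> bool) \<Rightarrow> 'a \<Rightarrow> 'a" where
  "comp_min E v = Min {u. E\<^sup>*\<^sup>* v u}"

definition is_path :: "('a \<Rightarrow> 'a \<Rightarrow> bool) \<Rightarrow> 'a list \<Rightarrow> 'a \<Rightarrow> 'a \<Rightarrow> bool" where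
  "is_path E xs u v \<longleftrightarrow> xs \<noteq> [] \<and> hd xs = u \<and> last xs = v
     \<and> (\<forall>i. Suc i < length xs \<longrightarrow> E (xs ! i) (xs ! Suc i))"

definition star_less :: "'a::linorder list \<Rightarrow> 'a list \<Rightarrow> bool" where
  "star_less xs ys \<longleftrightarrow> (xs, ys) \<in> lenlex {(x, y). x < y}"

definition least_path :: "('a::linorder \<Rightarrow> 'a \<Rightarrow> bool) \<Rightarrow> 'a \<Rightarrow> 'a \<Rightarrow> 'a list" where
  "least_path E u v = (THE p. is_path E p u v \<and>
       (\<forall>q. is_path E q u v \<longrightarrow> q = p \<or> star_less p q))"

definition precB :: "('a::linorder \<Rightarrow> 'a \<Rightarrow> bool) \<Rightarrow> 'a \<Rightarrow> 'a \<Rightarrow> bool" where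
  "precB E v w = (let v0 = comp_min E v; w0 = comp_min E w in
     if v0 \<noteq> w0 then v0 < w0
     else star_less (least_path E v0 v) (least_path E w0 w))"

text \<open>A listing v_0,...,v_{n-1} is a BFS visiting order (0-indexed version).\<close>
definition bfs_list :: "('a \<Rightarrow> 'a \<Rightarrow> bool) \<Rightarrow> 'a list \<Rightarrow> bool" where
  "bfs_list E xs \<longleftrightarrow> (\<forall>i < length xs. 1 \<le> i \<longrightarrow>
      (\<exists>j < i. \<exists>u. E (xs ! j) u \<and> u \<notin> set (take i xs)) \<longrightarrow>
      E (xs ! (LEAST j. j < i \<and> (\<exists>u. E (xs ! j) u \<and> u \<notin> set (take i xs)))) (xs ! i))"

definition bf_traversal :: "'a set \<Rightarrow> ('a \<Rightarrow> 'a \<Rightarrow> bool) \<Rightarrow> ('a \<Rightarrow> 'a \<Rightarrow> bool) \<Rightarrow> bool" where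
  "bf_traversal V E prec \<longleftrightarrow>
     strict_linear_order_on V {(v, w). v \<in> V \<and> w \<in> V \<and> prec v w}
     \<and> (\<forall>xs. set xs = V \<and> sorted_wrt prec xs \<longrightarrow> bfs_list E xs)"

end

theory Submission
  imports Defs
begin


lemma G_fin: "finite_graph V E \<Longrightarrow> finite V"
  unfolding finite_graph_def by blast
lemma G_in1: "finite_graph V E \<Longrightarrow> E x y \<Longrightarrow> x \<in> V"
  unfolding finite_graph_def by blast
lemma G_in2: "finite_graph V E \<Longrightarrow> E x y \<Longrightarrow> y \<in> V"
  unfolding finite_graph_def by blast
lemma G_sym: "finite_graph V E \<Longrightarrow> E x y \<Longrightarrow> E y x"
  unfolding finite_graph_def by blast

lemma sl_conv: "star_less xs ys \<longleftrightarrow> length xs < length ys \<or> length xs = length ys \<and> (xs, ys) \<in> lex {(x::'a::linorder, y). x < y}"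
  unfolding star_less_def lenlex_conv by simp

lemma sl_irrefl: "\<not> star_less xs (xs::'a::linorder list)"
  unfolding star_less_def by (rule lenlex_irreflexive) simp

lemma trans_R: "trans {(x::'a::linorder, y). x < y}"
  by (auto simp: trans_def)

lemma sl_trans: "star_less xs ys \<Longrightarrow> star_less ys zs \<Longrightarrow> star_less xs (zs::'a::linorder list)"
  unfolding star_less_def using lenlex_trans trans_R by blast

lemma sl_total: "xs \<noteq> ys \<Longrightarrow> star_less xs ys \<or> star_less ys (xs::'a::linorder list)"
proof -
  assume "xs \<noteq> ys"
  have "total {(x::'a, y). x < y}" by (auto simp: total_on_def)
  then have "total (lenlex {(x::'a, y). x < y})" by (rule total_lenlex)
  then show ?thesis using \<open>xs \<noteq> ys\<close> unfolding star_less_def total_on_def by blast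
qed

lemma sl_app: "star_less A B \<Longrightarrow> star_less (A @ [u]) (B @ [w::'a::linorder])"
  unfolding star_less_def by (rule lenlex_append1) auto

lemma sl_len: "star_less A B \<Longrightarrow> length A \<le> length B"
  unfolding star_less_def by (rule lenlex_length)

lemma sl_shorter: "length A < length B \<Longrightarrow> star_less A (B::'a::linorder list)"
  unfolding sl_conv by simp

lemma finite_least:
  assumes "finite S" "S \<noteq> {}"
  shows "\<exists>m\<in>S. \<forall>q\<in>S. q = m \<or> star_less m (q::'a::linorder list)"
  using assms
proof (induction S rule: finite_ne_induct)
  case (singleton x) then show ?case by auto
next
  case (insert x F)
  then obtain m where m: "m \<in> F" "\<forall>q\<in>F. q = m \<or> star_less m q" by auto
  show ?case
  proof (cases "star_less x m")
    case True
    have "\<forall>q\<in>insert x F. q = x \<or> star_less x q"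
    proof
      fix q assume "q \<in> insert x F"
      then consider "q = x" | "q \<in> F" by blast
      then show "q = x \<or> star_less x q"
      proof cases
        case 2
        then have "q = m \<or> star_less m q" using m by blast
        then show ?thesis using True sl_trans[of x m q] by auto
      qed simp
    qed
    then show ?thesis by blast
  next
    case False
    then have "x = m \<or> star_less m x" using sl_total by blast
    then show ?thesis using m by auto
  qed
qed

lemma path_set:
  assumes "finite_graph V E" "is_path E q u v"
  shows "set q \<subseteq> insert u V"
proof
  fix x assume "x \<in> set q"
  then obtain i where i: "i < length q" "q ! i = x" by (auto simp: in_set_conv_nth)
  show "x \<in> insert u V"
  proof (cases "Suc i < length q")
    case True
    then have "E (q ! i) (q ! Suc i)" using assms(2) by (auto simp: is_path_def)
    then show ?thesis using G_in1[OF assms(1)] i by auto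
  next
    case False
    show ?thesis
    proof (cases i)
      case 0 then show ?thesis using assms(2) i by (auto simp: is_path_def hd_conv_nth)
    next
      case (Suc k)
      then have "E (q ! k) (q ! i)" using assms(2) i by (auto simp: is_path_def)
      then show ?thesis using G_in2[OF assms(1)] i by auto
    qed
  qed
qed

lemma least_path_prop:
  assumes G: "finite_graph V E" and p0: "is_path E p0 u (v::'a::linorder)"
  shows "is_path E (least_path E u v) u v \<and>
     (\<forall>q. is_path E q u v \<longrightarrow> q = least_path E u v \<or> star_less (least_path E u v) q)"
proof -
  let ?S = "{q. is_path E q u v \<and> length q \<le> length p0}"
  have fin: "finite {q. set q \<subseteq> insert u V \<and> length q \<le> length p0}"
    by (rule finite_lists_length_le) (use G_fin[OF G] in simp)
  have "?S \<subseteq> {q. set q \<subseteq> insert u V \<and> length q \<le> length p0}"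
    using path_set[OF G] by auto
  then have "finite ?S" using fin finite_subset by blast
  moreover have "?S \<noteq> {}" using p0 by blast
  ultimately obtain m where m: "m \<in> ?S" "\<forall>q\<in>?S. q = m \<or> star_less m q"
    using finite_least by blast
  have P: "is_path E m u v \<and> (\<forall>q. is_path E q u v \<longrightarrow> q = m \<or> star_less m q)"
  proof (intro conjI allI impI)
    show "is_path E m u v" using m by blast
    fix q assume q: "is_path E q u v"
    show "q = m \<or> star_less m q"
    proof (cases "length q \<le> length p0")
      case True then show ?thesis using m q by blast
    next
      case False then show ?thesis using m sl_shorter[of m q] by auto
    qed
  qed
  have "least_path E u v = m"
    unfolding least_path_def
  proof (rule the_equality)
    show "is_path E m u v \<and> (\<forall>q. is_path E q u v \<longrightarrow> q = m \<or> star_less m q)" by (rule P)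
    fix p assume p: "is_path E p u v \<and> (\<forall>q. is_path E q u v \<longrightarrow> q = p \<or> star_less p q)"
    have "is_path E m u v" using P by (rule conjunct1)
    then have "m = p \<or> star_less p m" using p by simp
    moreover have "p = m \<or> star_less m p" using P p by blast
    ultimately show "p = m" using sl_trans[of p m p] sl_irrefl[of p] by auto
  qed
  then show ?thesis using P by simp
qed


lemma path_snoc: "is_path E B c p \<Longrightarrow> E p w \<Longrightarrow> is_path E (B @ [w]) c w"
proof -
  assume P: "is_path E B c p" and e: "E p w"
  have ne: "B \<noteq> []" and h: "hd B = c" and l: "last B = p"
    and st: "\<And>i. Suc i < length B \<Longrightarrow> E (B ! i) (B ! Suc i)"
    using P unfolding is_path_def by auto
  have "E ((B @ [w]) ! i) ((B @ [w]) ! Suc i)" if i: "Suc i < length (B @ [w])" for i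
  proof (cases "Suc i < length B")
    case True then show ?thesis using st[OF True] by (simp add: nth_append)
  next
    case False
    then have si: "Suc i = length B" using i by simp
    then have "(B @ [w]) ! i = last B" using ne si[symmetric] by (simp add: nth_append last_conv_nth)
    moreover have "(B @ [w]) ! Suc i = w" using si by (metis nth_append_length)
    ultimately show ?thesis using e l by simp
  qed
  then show ?thesis using ne h unfolding is_path_def by simp
qed

lemma reach_path: "E\<^sup>*\<^sup>* x y \<Longrightarrow> \<exists>p. is_path E p x y"
proof (induction rule: rtranclp_induct)
  case base
  have "is_path E [x] x x" by (simp add: is_path_def)
  then show ?case by blast
next
  case (step y z)
  then obtain p where "is_path E p x y" by blast
  then have "is_path E (p @ [z]) x z" using step(2) by (rule path_snoc)
  then show ?case by blast
qed

lemma path_unsnoc: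
  assumes P: "is_path E (B @ [w]) c v" and ne: "B \<noteq> []"
  shows "is_path E B c (last B) \<and> E (last B) w \<and> v = w"
proof -
  have e: "\<And>i. Suc i < length (B @ [w]) \<Longrightarrow> E ((B @ [w]) ! i) ((B @ [w]) ! Suc i)"
    using P unfolding is_path_def by blast
  have v: "v = w" using P by (simp add: is_path_def)
  have h: "hd B = c" using P ne by (simp add: is_path_def)
  have "E (B ! i) (B ! Suc i)" if "Suc i < length B" for i
  proof -
    have "E ((B @ [w]) ! i) ((B @ [w]) ! Suc i)" using e that by simp
    moreover have "(B @ [w]) ! i = B ! i" using that by (simp add: nth_append)
    moreover have "(B @ [w]) ! Suc i = B ! Suc i" using that by (simp add: nth_append)
    ultimately show ?thesis by simp
  qed
  then have p1: "is_path E B c (last B)" using ne h by (simp add: is_path_def)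
  obtain n where n: "length B = Suc n" using ne by (cases B) auto
  have "E ((B @ [w]) ! n) ((B @ [w]) ! Suc n)" using e n by simp
  moreover have "(B @ [w]) ! n = last B" using n ne by (simp add: nth_append last_conv_nth)
  moreover have "(B @ [w]) ! Suc n = w" using n by (metis nth_append_length)
  ultimately show ?thesis using p1 v by simp
qed

lemma path_reach: "is_path E p x y \<Longrightarrow> E\<^sup>*\<^sup>* x y"
proof (induction p arbitrary: y rule: rev_induct)
  case Nil then show ?case by (simp add: is_path_def)
next
  case (snoc a B)
  show ?case
  proof (cases "B = []")
    case True then show ?thesis using snoc.prems by (auto simp add: is_path_def)
  next
    case False
    then have "is_path E B x (last B)" "E (last B) a" "y = a"
      using path_unsnoc[OF snoc.prems] by auto
    then show ?thesis using snoc.IH by (metis rtranclp.rtrancl_into_rtrancl)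
  qed
qed

lemma reach_sym:
  assumes G: "finite_graph V E" shows "E\<^sup>*\<^sup>* x y \<Longrightarrow> E\<^sup>*\<^sup>* y x"
proof (induction rule: rtranclp_induct)
  case base then show ?case by simp
next
  case (step y z)
  then have "E z y" using G_sym[OF G] by blast
  then show ?case using step.IH by (rule converse_rtranclp_into_rtranclp)
qed

lemma comp_set_fin:
  assumes G: "finite_graph V E" and v: "v \<in> V"
  shows "finite {u. E\<^sup>*\<^sup>* v u}" "{u. E\<^sup>*\<^sup>* v u} \<subseteq> V"
proof -
  show "{u. E\<^sup>*\<^sup>* v u} \<subseteq> V"
  proof
    fix u assume "u \<in> {u. E\<^sup>*\<^sup>* v u}"
    then have "E\<^sup>*\<^sup>* v u" by simp
    then show "u \<in> V"
      by (induction rule: rtranclp_induct) (use v G_in2[OF G] in blast)+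
  qed
  moreover have "finite V" using G_fin[OF G] .
  ultimately show "finite {u. E\<^sup>*\<^sup>* v u}" by (rule finite_subset)
qed

lemma cm_reach:
  assumes G: "finite_graph V E" and v: "v \<in> V"
  shows "E\<^sup>*\<^sup>* v (comp_min E v)" "comp_min E v \<in> V"
proof -
  have "comp_min E v \<in> {u. E\<^sup>*\<^sup>* v u}" unfolding comp_min_def
    using comp_set_fin[OF G v] by (intro Min_in) auto
  then show "E\<^sup>*\<^sup>* v (comp_min E v)" "comp_min E v \<in> V" using comp_set_fin[OF G v] by auto
qed

lemma cm_eq:
  assumes G: "finite_graph V E" and r: "E\<^sup>*\<^sup>* x y"
  shows "comp_min E x = comp_min E y"
proof -
  have "{u. E\<^sup>*\<^sup>* x u} = {u. E\<^sup>*\<^sup>* y u}"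
  proof (intro set_eqI iffI; simp)
    fix u assume "E\<^sup>*\<^sup>* x u"
    moreover have "E\<^sup>*\<^sup>* y x" using reach_sym[OF G r] .
    ultimately show "E\<^sup>*\<^sup>* y u" by (rule rtranclp_trans[rotated])
  next
    fix u assume "E\<^sup>*\<^sup>* y u"
    with r show "E\<^sup>*\<^sup>* x u" by (rule rtranclp_trans)
  qed
  then show ?thesis unfolding comp_min_def by simp
qed

definition LP where "LP E v = least_path E (comp_min E v) v"

lemma LP_prop:
  assumes G: "finite_graph V E" and v: "v \<in> V"
  shows "is_path E (LP E v) (comp_min E v) v \<and>
     (\<forall>q. is_path E q (comp_min E v) v \<longrightarrow> q = LP E v \<or> star_less (LP E v) q)"
proof -
  have r: "E\<^sup>*\<^sup>* v (comp_min E v)" by (rule cm_reach(1)[OF G v])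
  have "E\<^sup>*\<^sup>* (comp_min E v) v" using reach_sym[OF G r] .
  then have "\<exists>p. is_path E p (comp_min E v) v" by (rule reach_path)
  then obtain p where p: "is_path E p (comp_min E v) v" by (elim exE)
  show ?thesis unfolding LP_def using least_path_prop[OF G p] .
qed

lemma precB_conv: "precB E v w \<longleftrightarrow> comp_min E v < comp_min E w \<or>
   comp_min E v = comp_min E w \<and> star_less (LP E v) (LP E w)"
  unfolding precB_def LP_def Let_def by (cases "comp_min E v = comp_min E w") simp_all

lemma precB_irrefl: "\<not> precB E v v"
  unfolding precB_conv using sl_irrefl by auto

lemma precB_trans: "precB E u v \<Longrightarrow> precB E v w \<Longrightarrow> precB E u w"
  unfolding precB_conv using sl_trans[of "LP E u" "LP E v" "LP E w"] by auto

lemma precB_total: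
  assumes G: "finite_graph V E" "v \<in> V" "w \<in> V" "v \<noteq> w"
  shows "precB E v w \<or> precB E w v"
proof -
  have "LP E v \<noteq> LP E w"
  proof
    assume eq: "LP E v = LP E w"
    have "last (LP E v) = v" using LP_prop[OF G(1,2)] unfolding is_path_def by blast
    moreover have "last (LP E w) = w" using LP_prop[OF G(1,3)] unfolding is_path_def by blast
    ultimately show False using eq G(4) by simp
  qed
  then have "star_less (LP E v) (LP E w) \<or> star_less (LP E w) (LP E v)" by (rule sl_total)
  then show ?thesis unfolding precB_conv by auto
qed




lemma not_less_single: "q \<noteq> [] \<Longrightarrow> hd q = x \<Longrightarrow> \<not> star_less q [x::'a::linorder]"
  unfolding sl_conv by (cases q) (auto simp: lex_conv)

lemma LP_root:
  assumes G: "finite_graph V E" and w: "w \<in> V" and a: "a \<in> V"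
    and c: "comp_min E a = comp_min E w" "w = comp_min E w"
  shows "\<not> star_less (LP E a) (LP E w)"
proof -
  have LPw: "is_path E (LP E w) (comp_min E w) w"
    and lw: "\<And>q. is_path E q (comp_min E w) w \<Longrightarrow> q = LP E w \<or> star_less (LP E w) q"
    using LP_prop[OF G w] by blast+
  have "is_path E [w] (comp_min E w) w" using c by (simp add: is_path_def)
  then have "[w] = LP E w \<or> star_less (LP E w) [w]" by (rule lw)
  moreover have "\<not> star_less (LP E w) [w]"
    using LPw c(2) unfolding is_path_def by (intro not_less_single) auto
  ultimately have eq: "LP E w = [w]" by simp
  have "LP E a \<noteq> []" "hd (LP E a) = w" using LP_prop[OF G a] c unfolding is_path_def by auto
  then have "\<not> star_less (LP E a) [w]" by (rule not_less_single)
  then show ?thesis using eq by simp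
qed

lemma LP_parent:
  assumes G: "finite_graph V E" and w: "w \<in> V" and ne: "w \<noteq> comp_min E w"
  shows "\<exists>p. p \<in> V \<and> E p w \<and> comp_min E p = comp_min E w \<and> LP E w = LP E p @ [w]"
proof -
  let ?c = "comp_min E w"
  have P: "is_path E (LP E w) ?c w"
    and lw: "\<And>q. is_path E q ?c w \<Longrightarrow> q = LP E w \<or> star_less (LP E w) q"
    using LP_prop[OF G w] by blast+
  then have nn: "LP E w \<noteq> []" and lst: "last (LP E w) = w" by (simp_all add: is_path_def)
  define B where "B = butlast (LP E w)"
  have B: "LP E w = B @ [w]" unfolding B_def using nn lst by (metis append_butlast_last_id)
  have "B \<noteq> []"
  proof
    assume "B = []"
    then have "LP E w = [w]" using B by simp
    then have "w = ?c" using P by (simp add: is_path_def)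
    then show False using ne by simp
  qed
  then have "is_path E B ?c (last B) \<and> E (last B) w \<and> w = w"
    using path_unsnoc[of E B w ?c w] P B by simp
  then have B1: "is_path E B ?c (last B)" and B2: "E (last B) w" by simp_all
  define p where "p = last B"
  have pV: "p \<in> V" using G_in1[OF G B2] unfolding p_def .
  have "E\<^sup>*\<^sup>* ?c p" using path_reach[OF B1] unfolding p_def .
  then have "comp_min E ?c = comp_min E p" by (rule cm_eq[OF G])
  moreover have "comp_min E w = comp_min E ?c" by (rule cm_eq[OF G cm_reach(1)[OF G w]])
  ultimately have cp: "comp_min E p = ?c" by simp
  have LPp: "is_path E (LP E p) ?c p"
    and lp: "\<And>q. is_path E q ?c p \<Longrightarrow> q = LP E p \<or> star_less (LP E p) q"
    using LP_prop[OF G pV] cp by auto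
  have "B = LP E p \<or> star_less (LP E p) B" using lp B1 unfolding p_def by blast
  moreover have "\<not> star_less (LP E p) B"
  proof
    assume "star_less (LP E p) B"
    then have s1: "star_less (LP E p @ [w]) (LP E w)" using B sl_app by simp
    have "is_path E (LP E p @ [w]) ?c w"
      using path_snoc[OF LPp] B2 unfolding p_def by simp
    then have "LP E p @ [w] = LP E w \<or> star_less (LP E w) (LP E p @ [w])" using lw by blast
    then show False using s1 sl_trans[of "LP E w" "LP E p @ [w]" "LP E w"] sl_irrefl by auto
  qed
  ultimately have "LP E w = LP E p @ [w]" using B by simp
  then show ?thesis using pV B2 cp unfolding p_def by blast
qed



theorem lemma5:
  fixes V :: "'a::linorder set" and E :: "'a \<Rightarrow> 'a \<Rightarrow> bool"
  assumes "finite_graph V E"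
  shows "bf_traversal V E (precB E)"
proof -
  note G = assms
  have slo: "strict_linear_order_on V {(v, w). v \<in> V \<and> w \<in> V \<and> precB E v w}"
    unfolding strict_linear_order_on_def
  proof (intro conjI)
    show "trans {(v, w). v \<in> V \<and> w \<in> V \<and> precB E v w}"
      unfolding trans_def using precB_trans by blast
    show "irrefl {(v, w). v \<in> V \<and> w \<in> V \<and> precB E v w}"
      unfolding irrefl_def using precB_irrefl by blast
    show "total_on V {(v, w). v \<in> V \<and> w \<in> V \<and> precB E v w}"
      unfolding total_on_def using precB_total[OF G] by blast
  qed
  have "bfs_list E xs" if xsV: "set xs = V" and sw: "sorted_wrt (precB E) xs" for xs
    unfolding bfs_list_def
  proof (intro allI impI)
    fix i assume i: "i < length xs" "1 \<le> i"
    let ?Q = "\<lambda>j. j < i \<and> (\<exists>u. E (xs ! j) u \<and> u \<notin> set (take i xs))"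
    assume ex: "\<exists>j<i. \<exists>u. E (xs ! j) u \<and> u \<notin> set (take i xs)"
    define J where "J = (LEAST j. ?Q j)"
    have "\<exists>j. ?Q j" using ex by blast
    then have QJ: "?Q J" unfolding J_def by (rule LeastI_ex)
    have Jmin: "\<And>m. ?Q m \<Longrightarrow> J \<le> m" unfolding J_def by (rule Least_le)
    have lt: "\<And>k l. k < l \<Longrightarrow> l < length xs \<Longrightarrow> precB E (xs ! k) (xs ! l)"
      using sw by (simp add: sorted_wrt_iff_nth_less)
    have dist: "distinct xs" unfolding distinct_conv_nth
    proof (intro allI impI)
      fix k l assume kl: "k < length xs" "l < length xs" "k \<noteq> l"
      show "xs ! k \<noteq> xs ! l"
      proof (cases "k < l")
        case True then show ?thesis using lt[of k l] kl precB_irrefl by metis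
      next
        case False then have "l < k" using kl by simp
        then show ?thesis using lt[of l k] kl precB_irrefl by metis
      qed
    qed
    have intake: "xs ! k \<in> set (take i xs) \<longleftrightarrow> k < i" if k: "k < length xs" for k
    proof
      assume "xs ! k \<in> set (take i xs)"
      then obtain l where l: "l < length (take i xs)" "take i xs ! l = xs ! k"
        by (auto simp: in_set_conv_nth)
      then have "xs ! l = xs ! k" "l < i" "l < length xs" by auto
      then show "k < i" using nth_eq_iff_index_eq[OF dist \<open>l < length xs\<close> k] by simp
    next
      assume ki: "k < i"
      then have "take i xs ! k = xs ! k" by simp
      moreover have "k < length (take i xs)" using ki k by simp
      ultimately show "xs ! k \<in> set (take i xs)" by (metis nth_mem)
    qed
    let ?w = "xs ! i" and ?a = "xs ! J"
    have wV: "?w \<in> V" using i xsV by auto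
    have Ji: "J < i" using QJ by blast
    have aV: "?a \<in> V" using Ji i xsV by auto
    obtain u where u: "E ?a u" "u \<notin> set (take i xs)" using QJ by blast
    have uV: "u \<in> V" using G_in2[OF G u(1)] .
    then obtain k where k: "k < length xs" "xs ! k = u" using xsV by (metis in_set_conv_nth)
    have ki: "i \<le> k" using intake[OF k(1)] u k by auto
    have wu: "?w = u \<or> precB E ?w u"
    proof (cases "i = k")
      case True then show ?thesis using k by simp
    next
      case False then have "i < k" using ki by simp
      then show ?thesis using lt[of i k] k by simp
    qed
    have aw: "precB E ?a ?w" using lt[of J i] Ji i by blast
    have "E\<^sup>*\<^sup>* ?a u" using u(1) by blast
    then have cu: "comp_min E ?a = comp_min E u" by (rule cm_eq[OF G])
    have cw: "comp_min E ?w = comp_min E ?a"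
    proof -
      have "comp_min E ?a \<le> comp_min E ?w" using aw unfolding precB_conv by auto
      moreover have "comp_min E ?w \<le> comp_min E u" using wu unfolding precB_conv by auto
      ultimately show ?thesis using cu by simp
    qed
    have wc: "?w \<noteq> comp_min E ?w"
    proof
      assume h: "?w = comp_min E ?w"
      have "\<not> star_less (LP E ?a) (LP E ?w)" using LP_root[OF G wV aV cw[symmetric] h] .
      then show False using aw cw unfolding precB_conv by simp
    qed
    obtain p where p: "p \<in> V" "E p ?w" "comp_min E p = comp_min E ?w" "LP E ?w = LP E p @ [?w]"
      using LP_parent[OF G wV wc] by blast
    have "star_less (LP E p) (LP E ?w)" using p(4) sl_shorter[of "LP E p" "LP E ?w"] by simp
    then have pw: "precB E p ?w" unfolding precB_conv using p(3) by simp
    obtain m where m: "m < length xs" "xs ! m = p" using p(1) xsV by (metis in_set_conv_nth)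
    have mi: "m < i"
    proof (rule ccontr)
      assume "\<not> m < i"
      then consider "m = i" | "i < m" by linarith
      then show False
      proof cases
        case 1 then show False using pw m precB_irrefl by metis
      next
        case 2 then have "precB E ?w p" using lt[of i m] m by simp
        then have "precB E p p" using pw precB_trans by metis
        then show False using precB_irrefl by metis
      qed
    qed
    have "?w \<notin> set (take i xs)" using intake[OF i(1)] by simp
    then have "?Q m" using mi p(2) m(2) by blast
    then have Jm: "J \<le> m" by (rule Jmin)
    show "E (xs ! J) (xs ! i)"
    proof (cases "J = m")
      case True then show ?thesis using m p by simp
    next
      case False
      then have "precB E ?a p" using lt[of J m] Jm m by simp
      then have ap: "star_less (LP E ?a) (LP E p)" using p(3) cw unfolding precB_conv by simp
      have s1: "star_less (LP E ?a @ [u]) (LP E ?w)" using sl_app[OF ap] p(4) by simp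
      have s2: "LP E ?w = LP E u \<or> star_less (LP E ?w) (LP E u)"
        using wu cu cw unfolding precB_conv by auto
      have "is_path E (LP E ?a) (comp_min E u) ?a" using LP_prop[OF G aV] cu by simp
      then have "is_path E (LP E ?a @ [u]) (comp_min E u) u" using u(1) by (rule path_snoc)
      then have s3: "LP E ?a @ [u] = LP E u \<or> star_less (LP E u) (LP E ?a @ [u])"
        using LP_prop[OF G uV] by blast
      have "star_less (LP E ?a @ [u]) (LP E u)"
        using s1 s2 sl_trans[of "LP E ?a @ [u]" "LP E ?w" "LP E u"] by auto
      then have "star_less (LP E u) (LP E u) \<or> star_less (LP E ?a @ [u]) (LP E ?a @ [u])"
        using s3 sl_trans[of "LP E ?a @ [u]" "LP E u" "LP E ?a @ [u]"] by auto
      then show ?thesis using sl_irrefl by blast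
    qed
  qed
  then show ?thesis unfolding bf_traversal_def using slo by blast
qed

end
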